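(* Let $\mathcal{X}\subseteq\mathbb{R}^d$ be a nonempty closed convex bounded set with $R\ge\max_{x,y\in\mathcal{X}}\|x-y\|$, and let $F\colon\mathcal{X}\to\mathbb{R}^d$ be $\beta$-smooth with respect to the $\ell_2$-norm. Consider the iterates $x_t,z_t$ and step sizes $\gamma_t$ of Algorithm AdaPEG (described in the context), where $\widehat{F(x_t)}\in\mathbb{R}^d$ are the oracle answers, and let $\xi_t=F(x_t)-\widehat{F(x_t)}$. Then \[\left(\frac12\frac{R^2}{\eta}+2\eta\right)\sqrt{\sum_{t=1}^T\left\|\widehat{F(x_t)}-\widehat{F(x_{t-1})}\right\|^2}-\frac12\sum_{t=1}^T\gamma_{t-1}\left(\|x_t-z_{t-1}\|^2+\|x_{t-1}-z_{t-1}\|^2\right)\] \[\le\beta\left(\frac12\frac{R^2}{\eta}+2\eta\right)\left((2+\sqrt2)R+4\eta\right)+\left(\sqrt2\frac{R^2}{\eta}+4\sqrt2\eta\right)\sqrt{\sum_{t=0}^T\|\xi_t\|^2}.\]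
   Context: $\|\cdot\|$ is the Euclidean norm; $\beta$-smooth: $\|F(x)-F(y)\|\le\beta\|x-y\|$ for all $x,y\in\mathcal{X}$. Algorithm AdaPEG: $x_0=z_0\in\mathcal{X}$, $\gamma_0\ge0$, $\eta>0$. For $t=1,\dots,T$: $x_t=\arg\min_{u\in\mathcal{X}}\{\langle\widehat{F(x_{t-1})},u\rangle+\tfrac12\gamma_{t-1}\|u-z_{t-1}\|^2\}$; $\gamma_t=\frac1\eta\sqrt{\eta^2\gamma_0^2+\sum_{s=1}^t\|\widehat{F(x_s)}-\widehat{F(x_{s-1})}\|^2}$; $z_t=\arg\min_{u\in\mathcal{X}}\{\langle\widehat{F(x_t)},u\rangle+\tfrac12\gamma_{t-1}\|u-z_{t-1}\|^2+\tfrac12(\gamma_t-\gamma_{t-1})\|u-x_t\|^2\}$. *)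

theory Defs
  imports "HOL-Analysis.Analysis"
begin

definition is_minimizer :: "'a set \<Rightarrow> ('a \<Rightarrow> real) \<Rightarrow> 'a \<Rightarrow> bool" where
  "is_minimizer X f x \<longleftrightarrow> x \<in> X \<and> (\<forall>u\<in>X. f x \<le> f u)"

end

theory Submission
  imports Defs
begin


lemma shift_sum_le:
  fixes f :: "nat \<Rightarrow> real"
  assumes "\<And>t. f t \<ge> 0"
  shows "(\<Sum>t=1..T. f (t - 1)) \<le> (\<Sum>t=0..T. f t)"
proof -
  have "(\<Sum>t=1..T. f (t - 1)) = (\<Sum>t<T. f t)"
    by (induction T) auto
  also have "\<dots> \<le> (\<Sum>t=0..T. f t)"
    by (rule sum_mono2) (auto simp: assms)
  finally show ?thesis .
qed

lemma sq_sum_le: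
  fixes a b :: real
  shows "(a + b)\<^sup>2 \<le> 2 * (a\<^sup>2 + b\<^sup>2)"
proof -
  have "0 \<le> (a - b)\<^sup>2" by simp
  thus ?thesis by (simp add: power2_eq_square algebra_simps)
qed

lemma quad_bound:
  fixes p c u :: real
  assumes "c > 0" "u \<ge> 0"
  shows "p * sqrt u - c / 2 * u \<le> p\<^sup>2 / (2 * c)"
proof -
  have "0 \<le> (c * sqrt u - p)\<^sup>2" by simp
  hence "0 \<le> c\<^sup>2 * u - 2 * c * p * sqrt u + p\<^sup>2"
    using assms by (simp add: power2_diff power_mult_distrib algebra_simps)
  hence "c * (p * sqrt u - c / 2 * u) \<le> p\<^sup>2 / 2"
    by (simp add: algebra_simps power2_eq_square)
  thus ?thesis using assms by (simp add: field_simps)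
qed

theorem lemmaB8:
  fixes X :: "'a::euclidean_space set"
    and F :: "'a \<Rightarrow> 'a"
    and Fh :: "nat \<Rightarrow> 'a"
    and x z :: "nat \<Rightarrow> 'a"
    and \<gamma> :: "nat \<Rightarrow> real"
    and R \<beta> \<eta> :: real and T :: nat
  assumes X_ne: "X \<noteq> {}" and X_closed: "closed X" and X_convex: "convex X"
    and X_bounded: "bounded X"
    and R_diam: "\<forall>u\<in>X. \<forall>v\<in>X. norm (u - v) \<le> R"
    and beta_nonneg: "\<beta> \<ge> 0"
    and smooth: "\<forall>u\<in>X. \<forall>v\<in>X. norm (F u - F v) \<le> \<beta> * norm (u - v)"
    and init: "x 0 = z 0" "z 0 \<in> X"
    and gamma0: "\<gamma> 0 \<ge> 0"
    and eta_pos: "\<eta> > 0"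
    and x_step: "\<forall>t\<in>{1..T}. is_minimizer X
        (\<lambda>u. inner (Fh (t - 1)) u + 1/2 * \<gamma> (t - 1) * (norm (u - z (t - 1)))\<^sup>2) (x t)"
    and gamma_step: "\<forall>t\<in>{1..T}. \<gamma> t =
        (1 / \<eta>) * sqrt (\<eta>\<^sup>2 * (\<gamma> 0)\<^sup>2 + (\<Sum>s=1..t. (norm (Fh s - Fh (s - 1)))\<^sup>2))"
    and z_step: "\<forall>t\<in>{1..T}. is_minimizer X
        (\<lambda>u. inner (Fh t) u + 1/2 * \<gamma> (t - 1) * (norm (u - z (t - 1)))\<^sup>2
              + 1/2 * (\<gamma> t - \<gamma> (t - 1)) * (norm (u - x t))\<^sup>2) (z t)"
  shows "(1/2 * R\<^sup>2 / \<eta> + 2 * \<eta>) * sqrt (\<Sum>t=1..T. (norm (Fh t - Fh (t - 1)))\<^sup>2)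
           - 1/2 * (\<Sum>t=1..T. \<gamma> (t - 1) * ((norm (x t - z (t - 1)))\<^sup>2
                                           + (norm (x (t - 1) - z (t - 1)))\<^sup>2))
         \<le> \<beta> * (1/2 * R\<^sup>2 / \<eta> + 2 * \<eta>) * ((2 + sqrt 2) * R + 4 * \<eta>)
           + (sqrt 2 * R\<^sup>2 / \<eta> + 4 * sqrt 2 * \<eta>)
             * sqrt (\<Sum>t=0..T. (norm (F (x t) - Fh t))\<^sup>2)"
  proof -
  have R0: "R \<ge> 0" using R_diam X_ne by fastforce
  have xX: "x t \<in> X" if "t \<le> T" for t
  proof (cases "t = 0")
    case True thus ?thesis using init by simp
  next
    case False thus ?thesis using x_step that unfolding is_minimizer_def by auto
  qed
  define D where "D t = (norm (Fh t - Fh (t - 1)))\<^sup>2" for t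
  define d where "d t = norm (x t - x (t - 1))" for t
  define xi where "xi n = norm (F (x n) - Fh n)" for n
  define e where "e t = xi t + xi (t - 1)" for t
  define ab where "ab t = (norm (x t - z (t - 1)))\<^sup>2 + (norm (x (t - 1) - z (t - 1)))\<^sup>2" for t
  define A where "A = 1/2 * R\<^sup>2 / \<eta> + 2 * \<eta>"
  define c where "c = \<beta> * (R + 2 * \<eta>) / \<eta>"
  define Q where "Q = (\<Sum>t=0..T. (xi t)\<^sup>2)"
  define I where "I = {1..T}"
  have A0: "A > 0" unfolding A_def using eta_pos by (simp add: add_nonneg_pos)
  have c0: "c \<ge> 0" unfolding c_def using eta_pos beta_nonneg R0 by simp
  have D0: "D t \<ge> 0" for t unfolding D_def by simp
  have ab0: "ab t \<ge> 0" for t unfolding ab_def by simp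
  have xi0: "xi t \<ge> 0" for t unfolding xi_def by simp
  have e0: "e t \<ge> 0" for t unfolding e_def using xi0 by (simp add: add_nonneg_nonneg)
  have d0: "d t \<ge> 0" for t unfolding d_def by simp
  have g0: "\<gamma> (t - 1) \<ge> 0" if "t \<in> I" for t
  proof (cases "t - 1 = 0")
    case True thus ?thesis using gamma0 by simp
  next
    case False
    hence "t - 1 \<in> {1..T}" using that unfolding I_def by auto
    thus ?thesis using gamma_step eta_pos by (simp add: sum_nonneg)
  qed
  have F1: "sqrt (D t) \<le> \<beta> * d t + e t" if "t \<in> I" for t
  proof -
    have "Fh t - Fh (t - 1) = (F (x t) - F (x (t - 1))) - (F (x t) - Fh t) + (F (x (t - 1)) - Fh (t - 1))"
      by (simp add: algebra_simps)
    hence "norm (Fh t - Fh (t - 1)) \<le> norm (F (x t) - F (x (t - 1))) + xi t + xi (t - 1)"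
    proof -
      have "norm (Fh t - Fh (t - 1)) \<le> norm ((F (x t) - F (x (t - 1))) - (F (x t) - Fh t)) + norm (F (x (t - 1)) - Fh (t - 1))"
        unfolding \<open>Fh t - Fh (t - 1) = _\<close> by (rule norm_triangle_ineq)
      moreover have "norm ((F (x t) - F (x (t - 1))) - (F (x t) - Fh t)) \<le> norm (F (x t) - F (x (t - 1))) + norm (F (x t) - Fh t)"
        by (rule norm_triangle_ineq4)
      ultimately show ?thesis unfolding xi_def by linarith
    qed
    moreover have "norm (F (x t) - F (x (t - 1))) \<le> \<beta> * d t"
      unfolding d_def using smooth xX that unfolding I_def by auto
    ultimately show ?thesis unfolding D_def e_def by simp
  qed
  have F2: "d t \<le> R" if "t \<in> I" for t
    unfolding d_def using R_diam xX that unfolding I_def by auto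
  have F3: "(d t)\<^sup>2 \<le> 2 * ab t" for t
  proof -
    have "d t \<le> norm (x t - z (t - 1)) + norm (x (t - 1) - z (t - 1))"
    proof -
      have "x t - x (t - 1) = (x t - z (t - 1)) - (x (t - 1) - z (t - 1))" by simp
      thus ?thesis unfolding d_def by (metis norm_triangle_ineq4)
    qed
    hence "(d t)\<^sup>2 \<le> (norm (x t - z (t - 1)) + norm (x (t - 1) - z (t - 1)))\<^sup>2"
      using d0 by (simp add: power_mono)
    also have "\<dots> \<le> 2 * ab t" unfolding ab_def
      by (rule sq_sum_le)
    finally show ?thesis .
  qed
  have F4: "(\<Sum>t\<in>I. (e t)\<^sup>2) \<le> 4 * Q"
  proof -
    have "(\<Sum>t\<in>I. (e t)\<^sup>2) \<le> (\<Sum>t\<in>I. 2 * (xi t)\<^sup>2 + 2 * (xi (t - 1))\<^sup>2)"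
    proof (rule sum_mono)
      fix t show "(e t)\<^sup>2 \<le> 2 * (xi t)\<^sup>2 + 2 * (xi (t - 1))\<^sup>2"
        using sq_sum_le[of "xi t" "xi (t - 1)"] unfolding e_def by simp
    qed
    also have "\<dots> = 2 * (\<Sum>t=1..T. (xi t)\<^sup>2) + 2 * (\<Sum>t=1..T. (xi (t - 1))\<^sup>2)"
      unfolding I_def by (simp add: sum.distrib sum_distrib_left)
    also have "\<dots> \<le> 2 * Q + 2 * Q"
    proof -
      have "(\<Sum>t=1..T. (xi t)\<^sup>2) \<le> Q" unfolding Q_def by (rule sum_mono2) auto
      moreover have "(\<Sum>t=1..T. (xi (t - 1))\<^sup>2) \<le> Q" unfolding Q_def
        by (rule shift_sum_le[of "\<lambda>t. (xi t)\<^sup>2"]) simp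
      ultimately show ?thesis by simp
    qed
    finally show ?thesis by simp
  qed
  define K where "K = {t\<in>{0..T}. (\<Sum>s=1..t. D s) \<le> \<eta>\<^sup>2 * c\<^sup>2}"
  define k where "k = Max K"
  have K0: "0 \<in> K" unfolding K_def by simp
  have Kf: "finite K" unfolding K_def by simp
  have kK: "k \<in> K" unfolding k_def using K0 Kf Max_in by blast
  hence kT: "k \<le> T" and kE: "(\<Sum>s=1..k. D s) \<le> \<eta>\<^sup>2 * c\<^sup>2" unfolding K_def by auto
  have gG: "\<gamma> (t - 1) \<ge> c" if "t \<in> {k+2..T}" for t
  proof -
    have "t - 1 \<notin> K"
    proof
      assume "t - 1 \<in> K" hence "t - 1 \<le> k" unfolding k_def using Kf by simp
      thus False using that by auto
    qed
    hence big: "(\<Sum>s=1..t-1. D s) > \<eta>\<^sup>2 * c\<^sup>2" unfolding K_def using that by auto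
    have "t - 1 \<in> {1..T}" using that by auto
    hence "\<gamma> (t - 1) = (1 / \<eta>) * sqrt (\<eta>\<^sup>2 * (\<gamma> 0)\<^sup>2 + (\<Sum>s=1..t-1. D s))"
      using gamma_step unfolding D_def by simp
    also have "\<dots> \<ge> (1 / \<eta>) * sqrt (\<eta>\<^sup>2 * c\<^sup>2)"
    proof -
      have "0 \<le> \<eta>\<^sup>2 * (\<gamma> 0)\<^sup>2" by simp
      hence "\<eta>\<^sup>2 * c\<^sup>2 \<le> \<eta>\<^sup>2 * (\<gamma> 0)\<^sup>2 + (\<Sum>s=1..t-1. D s)" using big by linarith
      thus ?thesis using eta_pos by (intro mult_left_mono real_sqrt_le_mono) auto
    qed
    finally show ?thesis using eta_pos c0 by (simp add: real_sqrt_mult)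
  qed
  define G where "G = {k+2..T}"
  define u where "u = (\<Sum>t\<in>G. ab t)"
  have u0: "u \<ge> 0" unfolding u_def using ab0 by (simp add: sum_nonneg)
  have GI: "G \<subseteq> I" unfolding G_def I_def by auto
  have IS: "I = {1..k} \<union> {k+1..T}" unfolding I_def using kT by auto
  have S1: "sqrt (\<Sum>t\<in>I. D t) \<le> sqrt (\<Sum>t=1..k. D t) + sqrt (\<Sum>t=k+1..T. D t)"
  proof -
    have "(\<Sum>t\<in>I. D t) = (\<Sum>t=1..k. D t) + (\<Sum>t=k+1..T. D t)"
      unfolding IS by (rule sum.union_disjoint) auto
    thus ?thesis by (simp add: sqrt_add_le_add_sqrt sum_nonneg D0)
  qed
  have S2: "sqrt (\<Sum>t=1..k. D t) \<le> \<eta> * c"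
  proof -
    have "sqrt (\<Sum>t=1..k. D t) \<le> sqrt (\<eta>\<^sup>2 * c\<^sup>2)" using kE by (rule real_sqrt_le_mono)
    also have "\<dots> = \<eta> * c" using eta_pos c0 by (simp add: real_sqrt_mult)
    finally show ?thesis .
  qed
  have S3: "sqrt (\<Sum>t=k+1..T. D t) \<le> \<beta> * R + \<beta> * sqrt (2 * u) + 2 * sqrt Q"
  proof -
    let ?M = "{k+1..T}"
    have "sqrt (\<Sum>t\<in>?M. D t) = L2_set (\<lambda>t. sqrt (D t)) ?M"
      unfolding L2_set_def using D0 by simp
    also have "\<dots> \<le> L2_set (\<lambda>t. \<beta> * d t + e t) ?M"
      by (rule L2_set_mono) (use F1 kT D0 in \<open>auto simp: I_def\<close>)
    also have "\<dots> \<le> L2_set (\<lambda>t. \<beta> * d t) ?M + L2_set e ?M"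
      by (rule L2_set_triangle_ineq)
    also have "L2_set e ?M \<le> 2 * sqrt Q"
    proof -
      have "L2_set e ?M \<le> sqrt (\<Sum>t\<in>I. (e t)\<^sup>2)"
        unfolding L2_set_def by (rule real_sqrt_le_mono, rule sum_mono2) (auto simp: I_def)
      also have "\<dots> \<le> sqrt (4 * Q)" using F4 by simp
      also have "\<dots> = 2 * sqrt Q" by (simp add: real_sqrt_mult)
      finally show ?thesis .
    qed
    also have "L2_set (\<lambda>t. \<beta> * d t) ?M \<le> \<beta> * R + \<beta> * sqrt (2 * u)"
    proof (cases "k < T")
      case True
      have Meq: "?M = insert (k+1) G" unfolding G_def using True by auto
      have "L2_set (\<lambda>t. \<beta> * d t) ?M = sqrt ((\<beta> * d (k+1))\<^sup>2 + (\<Sum>t\<in>G. (\<beta> * d t)\<^sup>2))"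
        unfolding Meq L2_set_def G_def by simp
      also have "\<dots> \<le> sqrt ((\<beta> * d (k+1))\<^sup>2) + sqrt (\<Sum>t\<in>G. (\<beta> * d t)\<^sup>2)"
        by (rule sqrt_add_le_add_sqrt) (auto simp: sum_nonneg)
      also have "sqrt ((\<beta> * d (k+1))\<^sup>2) \<le> \<beta> * R"
        using F2[of "k+1"] True beta_nonneg d0 by (simp add: I_def mult_left_mono)
      also have "sqrt (\<Sum>t\<in>G. (\<beta> * d t)\<^sup>2) \<le> \<beta> * sqrt (2 * u)"
      proof -
        have "(\<Sum>t\<in>G. (\<beta> * d t)\<^sup>2) = \<beta>\<^sup>2 * (\<Sum>t\<in>G. (d t)\<^sup>2)"
          by (simp add: power_mult_distrib sum_distrib_left)
        also have "\<dots> \<le> \<beta>\<^sup>2 * (2 * u)"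
        proof -
          have "(\<Sum>t\<in>G. (d t)\<^sup>2) \<le> (\<Sum>t\<in>G. 2 * ab t)" by (rule sum_mono) (rule F3)
          thus ?thesis unfolding u_def sum_distrib_left[symmetric] by (intro mult_left_mono) auto
        qed
        finally have "sqrt (\<Sum>t\<in>G. (\<beta> * d t)\<^sup>2) \<le> sqrt (\<beta>\<^sup>2 * (2 * u))"
          by (rule real_sqrt_le_mono)
        thus ?thesis using beta_nonneg by (simp add: real_sqrt_mult)
      qed
      finally show ?thesis by simp
    next
      case False
      hence "?M = {}" using kT by auto
      thus ?thesis using beta_nonneg R0 u0 by simp
    qed
    finally show ?thesis by simp
  qed
  have Sg: "c * u \<le> (\<Sum>t\<in>I. \<gamma> (t - 1) * ab t)"
  proof -
    have "c * u = (\<Sum>t\<in>G. c * ab t)" unfolding u_def by (simp add: sum_distrib_left)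
    also have "\<dots> \<le> (\<Sum>t\<in>G. \<gamma> (t - 1) * ab t)"
      by (rule sum_mono, rule mult_right_mono) (use gG ab0 in \<open>auto simp: G_def\<close>)
    also have "\<dots> \<le> (\<Sum>t\<in>I. \<gamma> (t - 1) * ab t)"
      by (rule sum_mono2) (use GI g0 ab0 in \<open>auto simp: I_def\<close>)
    finally show ?thesis .
  qed
  have quad: "A * \<beta> * sqrt 2 * sqrt u - c / 2 * u \<le> A * \<beta> * (R + 2 * \<eta>) / 2"
  proof (cases "\<beta> = 0")
    case True thus ?thesis unfolding c_def using u0 by simp
  next
    case False
    hence bp: "\<beta> > 0" using beta_nonneg by simp
    hence cp: "c > 0" unfolding c_def using R0 eta_pos by simp
    have "A * \<beta> * sqrt 2 * sqrt u - c / 2 * u \<le> (A * \<beta> * sqrt 2)\<^sup>2 / (2 * c)"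
      by (rule quad_bound[OF cp u0])
    also have "\<dots> = A * \<beta> * (A * \<eta>) / (R + 2 * \<eta>)"
    proof -
      have "(A * \<beta> * sqrt 2)\<^sup>2 = 2 * A\<^sup>2 * \<beta>\<^sup>2" by (simp add: power_mult_distrib)
      moreover have "R + 2 * \<eta> \<noteq> 0" "\<beta> \<noteq> 0" "\<eta> \<noteq> 0" using R0 eta_pos bp by auto
      moreover have "R * (\<beta> * 2) + \<beta> * (\<eta> * 4) > 0" using R0 eta_pos bp by (simp add: add_nonneg_pos)
      ultimately show ?thesis unfolding c_def by (simp add: field_simps power2_eq_square)
    qed
    also have "\<dots> \<le> A * \<beta> * (R + 2 * \<eta>) / 2"
    proof -
      have "A * \<eta> \<le> (R + 2 * \<eta>)\<^sup>2 / 2" unfolding A_def using eta_pos R0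
        by (simp add: field_simps power2_eq_square)
      hence "A * \<eta> / (R + 2 * \<eta>) \<le> (R + 2 * \<eta>) / 2"
        using eta_pos R0 by (simp add: field_simps power2_eq_square)
      hence "A * \<beta> * (A * \<eta> / (R + 2 * \<eta>)) \<le> A * \<beta> * ((R + 2 * \<eta>) / 2)"
        using A0 bp by (intro mult_left_mono) auto
      thus ?thesis by simp
    qed
    finally show ?thesis .
  qed
  have main: "A * sqrt (\<Sum>t\<in>I. D t) - 1/2 * (\<Sum>t\<in>I. \<gamma> (t - 1) * ab t)
      \<le> A * (\<eta> * c + \<beta> * R) + A * \<beta> * (R + 2 * \<eta>) / 2 + A * (2 * sqrt Q)"
  proof -
    have "sqrt (\<Sum>t\<in>I. D t) \<le> \<eta> * c + (\<beta> * R + \<beta> * sqrt (2 * u) + 2 * sqrt Q)"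
      using S1 S2 S3 by simp
    hence "A * sqrt (\<Sum>t\<in>I. D t) \<le> A * (\<eta> * c + (\<beta> * R + \<beta> * sqrt (2 * u) + 2 * sqrt Q))"
      using A0 by (simp add: mult_left_mono)
    moreover have "sqrt (2 * u) = sqrt 2 * sqrt u" by (simp add: real_sqrt_mult)
    ultimately have "A * sqrt (\<Sum>t\<in>I. D t) \<le> A * (\<eta> * c + \<beta> * R) + A * \<beta> * sqrt 2 * sqrt u + A * (2 * sqrt Q)"
      by (simp add: algebra_simps)
    thus ?thesis using Sg quad by linarith
  qed
  have fin: "A * (\<eta> * c + \<beta> * R) + A * \<beta> * (R + 2 * \<eta>) / 2 \<le> \<beta> * A * ((2 + sqrt 2) * R + 4 * \<eta>)"
  proof -
    have "\<eta> * c = \<beta> * (R + 2 * \<eta>)" unfolding c_def using eta_pos by simp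
    moreover have "sqrt 2 \<ge> 1" by simp
    hence "\<beta> * R * sqrt 2 \<ge> \<beta> * R * 1" using beta_nonneg R0 by (intro mult_left_mono) auto
    ultimately have "\<eta> * c + \<beta> * R + \<beta> * (R + 2 * \<eta>) / 2 \<le> \<beta> * ((2 + sqrt 2) * R + 4 * \<eta>)"
    proof -
      assume h1: "\<eta> * c = \<beta> * (R + 2 * \<eta>)" and h2: "\<beta> * R * sqrt 2 \<ge> \<beta> * R * 1"
      have e1: "\<eta> * c + \<beta> * R + \<beta> * (R + 2 * \<eta>) / 2 = 5/2 * (\<beta> * R) + 3 * (\<beta> * \<eta>)"
        using h1 by (simp add: field_simps)
      have e2: "\<beta> * ((2 + sqrt 2) * R + 4 * \<eta>) = 2 * (\<beta> * R) + \<beta> * R * sqrt 2 + 4 * (\<beta> * \<eta>)"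
        by (simp add: algebra_simps)
      have "0 \<le> \<beta> * \<eta>" "0 \<le> \<beta> * R" using beta_nonneg eta_pos R0 by auto
      thus ?thesis unfolding e1 e2 using h2 by linarith
    qed
    hence "A * (\<eta> * c + \<beta> * R + \<beta> * (R + 2 * \<eta>) / 2) \<le> A * (\<beta> * ((2 + sqrt 2) * R + 4 * \<eta>))"
      using A0 by (simp add: mult_left_mono)
    thus ?thesis by (simp add: algebra_simps)
  qed
  have xiQ: "A * (2 * sqrt Q) \<le> (sqrt 2 * R\<^sup>2 / \<eta> + 4 * sqrt 2 * \<eta>) * sqrt Q"
  proof -
    have "sqrt 2 * R\<^sup>2 / \<eta> + 4 * sqrt 2 * \<eta> = sqrt 2 * (2 * A)" unfolding A_def by (simp add: algebra_simps)
    moreover have "2 * A \<le> sqrt 2 * (2 * A)" using A0 by simp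
    moreover have "0 \<le> sqrt Q" unfolding Q_def by (simp add: sum_nonneg)
    ultimately show ?thesis using A0
      by (metis mult.assoc mult.commute mult_right_mono)
  qed
  have lhs: "(\<Sum>t=1..T. (norm (Fh t - Fh (t - 1)))\<^sup>2) = (\<Sum>t\<in>I. D t)" unfolding I_def D_def ..
  have lhs2: "(\<Sum>t=1..T. \<gamma> (t - 1) * ((norm (x t - z (t - 1)))\<^sup>2 + (norm (x (t - 1) - z (t - 1)))\<^sup>2))
     = (\<Sum>t\<in>I. \<gamma> (t - 1) * ab t)" unfolding I_def ab_def ..
  have rhs: "(\<Sum>t=0..T. (norm (F (x t) - Fh t))\<^sup>2) = Q" unfolding Q_def xi_def ..
  show ?thesis unfolding lhs lhs2 rhs A_def[symmetric]
    using main fin xiQ by linarith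
qed

end
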